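(* Assume conditions A and D' hold for the family of stochastic matrices $(p_{ij}(\varepsilon))_{i,j\in\mathbb{X}}$, $\varepsilon\in(0,\varepsilon_0]$. Then for every $r\in\mathbb{X}$ the non-absorption probability $\bar p_{rr}(\varepsilon)=1-p_{rr}(\varepsilon)$ admits a pivotal expansion with explicit power-type remainder bound: there exist integers $0\le\bar l^-_{rr}\le\bar l^+_{rr}$, real coefficients $\bar a_{rr}[l]$, $\bar l^-_{rr}\le l\le\bar l^+_{rr}$, with $\bar a_{rr}[\bar l^-_{rr}]\ne0$, and constants $\bar\delta_{rr}\in(0,1]$, $\bar G_{rr}\in(0,\infty)$, $\bar\varepsilon_{rr}\in(0,\varepsilon_0]$, such that $\big|\bar p_{rr}(\varepsilon)-\sum_{l=\bar l^-_{rr}}^{\bar l^+_{rr}}\bar a_{rr}[l]\varepsilon^l\big|\le\bar G_{rr}\varepsilon^{\bar l^+_{rr}+\bar\delta_{rr}}$ for $0<\varepsilon\le\bar\varepsilon_{rr}$.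
   Context: Let $\mathbb{X}=\{1,\dots,N\}$, $0<\varepsilon_0\le1$, and for each $\varepsilon\in(0,\varepsilon_0]$ let $(p_{ij}(\varepsilon))_{i,j\in\mathbb{X}}$ be a stochastic matrix (transition probabilities of a Markov chain). Condition A: there are nonempty sets $\mathbb{Y}_i\subseteq\mathbb{X}$, $i\in\mathbb{X}$, such that (a) $p_{ij}(\varepsilon)>0$ for $j\in\mathbb{Y}_i$, $i\in\mathbb{X}$, $\varepsilon\in(0,\varepsilon_0]$; (b) $p_{ij}(\varepsilon)=0$ for $j\notin\mathbb{Y}_i$, $i\in\mathbb{X}$, $\varepsilon\in(0,\varepsilon_0]$; (c) for every $i,j\in\mathbb{X}$ there exist $n\ge1$ and states $i=l_0,l_1,\dots,l_n=j$ with $l_m\in\mathbb{Y}_{l_{m-1}}$ for $m=1,\dots,n$. Condition D': for all $i\in\mathbb{X}$, $j\in\mathbb{Y}_i$, $p_{ij}(\varepsilon)=\sum_{l=l^-_{ij}}^{l^+_{ij}}a_{ij}[l]\varepsilon^l+o_{ij}(\varepsilon)$ for $\varepsilon\in(0,\varepsilon_0]$, where $0\le l^-_{ij}\le l^+_{ij}<\infty$ are integers, $a_{ij}[l^-_{ij}]>0$, and $|o_{ij}(\varepsilon)|\le G_{ij}\varepsilon^{l^+_{ij}+\delta_{ij}}$ for $0<\varepsilon\le\varepsilon_{ij}$, with $\delta_{ij}\in(0,1]$, $G_{ij}\in(0,\infty)$, $\varepsilon_{ij}\in(0,\varepsilon_0]$. *)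

theory Defs
  imports Complex_Main
begin

definition stochastic_family :: "nat \<Rightarrow> real \<Rightarrow> (real \<Rightarrow> nat \<Rightarrow> nat \<Rightarrow> real) \<Rightarrow> bool" where
  "stochastic_family N eps0 p \<longleftrightarrow>
     (\<forall>eps. 0 < eps \<and> eps \<le> eps0 \<longrightarrow>
        (\<forall>i\<in>{1..N}. (\<forall>j\<in>{1..N}. 0 \<le> p eps i j) \<and> (\<Sum>j=1..N. p eps i j) = 1))"

definition condition_A :: "nat \<Rightarrow> real \<Rightarrow> (real \<Rightarrow> nat \<Rightarrow> nat \<Rightarrow> real) \<Rightarrow> (nat \<Rightarrow> nat set) \<Rightarrow> bool" where
  "condition_A N eps0 p Y \<longleftrightarrow>
     (\<forall>i\<in>{1..N}. Y i \<noteq> {} \<and> Y i \<subseteq> {1..N}) \<and>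
     (\<forall>eps. 0 < eps \<and> eps \<le> eps0 \<longrightarrow>
        (\<forall>i\<in>{1..N}. \<forall>j\<in>Y i. p eps i j > 0)) \<and>
     (\<forall>eps. 0 < eps \<and> eps \<le> eps0 \<longrightarrow>
        (\<forall>i\<in>{1..N}. \<forall>j\<in>{1..N}. j \<notin> Y i \<longrightarrow> p eps i j = 0)) \<and>
     (\<forall>i\<in>{1..N}. \<forall>j\<in>{1..N}. \<exists>n::nat. \<exists>l::nat \<Rightarrow> nat.
        n \<ge> 1 \<and> l 0 = i \<and> l n = j \<and> (\<forall>m\<in>{1..n}. l m \<in> Y (l (m - 1))))"

definition expansion_with_bound ::
  "real \<Rightarrow> (real \<Rightarrow> real) \<Rightarrow> nat \<Rightarrow> nat \<Rightarrow> (nat \<Rightarrow> real) \<Rightarrow> real \<Rightarrow> real \<Rightarrow> real \<Rightarrow> bool" where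
  "expansion_with_bound eps0 f lm lp a \<delta> G e \<longleftrightarrow>
     lm \<le> lp \<and> 0 < \<delta> \<and> \<delta> \<le> 1 \<and> 0 < G \<and> 0 < e \<and> e \<le> eps0 \<and>
     (\<forall>eps. 0 < eps \<and> eps \<le> e \<longrightarrow>
        \<bar>f eps - (\<Sum>l=lm..lp. a l * eps ^ l)\<bar> \<le> G * eps powr (real lp + \<delta>))"

definition condition_D' :: "nat \<Rightarrow> real \<Rightarrow> (real \<Rightarrow> nat \<Rightarrow> nat \<Rightarrow> real) \<Rightarrow> (nat \<Rightarrow> nat set) \<Rightarrow> bool" where
  "condition_D' N eps0 p Y \<longleftrightarrow>
     (\<forall>i\<in>{1..N}. \<forall>j\<in>Y i. \<exists>lm lp a \<delta> G e.
        expansion_with_bound eps0 (\<lambda>eps. p eps i j) lm lp a \<delta> G e \<and> a lm > 0)"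

end

theory Submission
  imports Defs
begin

lemma trunc:
  assumes ex: "expansion_with_bound eps0 f lm1 lp1 a1 d1 G1 e1" and e0: "eps0 \<le> 1"
    and h: "lm \<le> lm1" "lp \<le> lp1" "lm \<le> lp" "0 < d" "d \<le> d1"
  shows "expansion_with_bound eps0 f lm lp (\<lambda>l. if lm1 \<le> l \<and> l \<le> lp1 then a1 l else 0) d
           (G1 + (\<Sum>l=0..lp1. \<bar>a1 l\<bar>)) e1"
proof -
  define b where "b = (\<lambda>l. if lm1 \<le> l \<and> l \<le> lp1 then a1 l else 0)"
  from ex have E: "lm1 \<le> lp1" "0 < d1" "d1 \<le> 1" "0 < G1" "0 < e1" "e1 \<le> eps0"
    and B: "\<And>eps. 0 < eps \<Longrightarrow> eps \<le> e1 \<Longrightarrow>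
        \<bar>f eps - (\<Sum>l=lm1..lp1. a1 l * eps ^ l)\<bar> \<le> G1 * eps powr (real lp1 + d1)"
    unfolding expansion_with_bound_def by auto
  have Apos: "0 \<le> (\<Sum>l=0..lp1. \<bar>a1 l\<bar>)" by (simp add: sum_nonneg)
  have main: "\<bar>f eps - (\<Sum>l=lm..lp. b l * eps ^ l)\<bar> \<le> (G1 + (\<Sum>l=0..lp1. \<bar>a1 l\<bar>)) * eps powr (real lp + d)"
    if eps: "0 < eps" "eps \<le> e1" for eps
  proof -
    have eps1: "eps \<le> 1" using eps E e0 by linarith
    have s1: "(\<Sum>l=lm1..lp1. a1 l * eps ^ l) = (\<Sum>l=0..lp1. b l * eps ^ l)"
    proof -
      have "(\<Sum>l=0..lp1. b l * eps ^ l) = (\<Sum>l\<in>{0..lp1}. if l \<in> {lm1..lp1} then a1 l * eps ^ l else 0)"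
        by (rule sum.cong) (auto simp: b_def)
      also have "\<dots> = (\<Sum>l\<in>{0..lp1} \<inter> {lm1..lp1}. a1 l * eps ^ l)"
        by (rule sum.inter_restrict[symmetric]) simp
      also have "{0..lp1} \<inter> {lm1..lp1} = {lm1..lp1}" by auto
      finally show ?thesis by simp
    qed
    have s2: "(\<Sum>l=lm..lp. b l * eps ^ l) = (\<Sum>l=0..lp. b l * eps ^ l)"
    proof (rule sum.mono_neutral_left)
      show "\<forall>i\<in>{0..lp} - {lm..lp}. b i * eps ^ i = 0" using h by (auto simp: b_def)
    qed auto
    have s3: "(\<Sum>l=0..lp1. b l * eps ^ l) = (\<Sum>l=0..lp. b l * eps ^ l) + (\<Sum>l=Suc lp..lp1. b l * eps ^ l)"
    proof -
      have "{0..lp1} = {0..lp} \<union> {Suc lp..lp1}" using h by auto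
      then show ?thesis by (simp add: sum.union_disjoint)
    qed
    have t: "\<bar>b l * eps ^ l\<bar> \<le> \<bar>a1 l\<bar> * eps powr (real lp + d)" if l: "l \<in> {Suc lp..lp1}" for l
    proof -
      have "eps ^ l = eps powr real l" using eps by (simp add: powr_realpow)
      also have "\<dots> \<le> eps powr (real lp + d)"
        by (rule powr_mono') (use l h E eps eps1 in auto)
      finally have "eps ^ l \<le> eps powr (real lp + d)" .
      moreover have "\<bar>b l\<bar> \<le> \<bar>a1 l\<bar>" by (simp add: b_def)
      ultimately show ?thesis using eps
        by (simp add: abs_mult mult_mono)
    qed
    have tail: "\<bar>\<Sum>l=Suc lp..lp1. b l * eps ^ l\<bar> \<le> (\<Sum>l=0..lp1. \<bar>a1 l\<bar>) * eps powr (real lp + d)"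
    proof -
      have "\<bar>\<Sum>l=Suc lp..lp1. b l * eps ^ l\<bar> \<le> (\<Sum>l=Suc lp..lp1. \<bar>b l * eps ^ l\<bar>)" by (rule sum_abs)
      also have "\<dots> \<le> (\<Sum>l=Suc lp..lp1. \<bar>a1 l\<bar> * eps powr (real lp + d))" by (rule sum_mono) (rule t)
      also have "\<dots> = (\<Sum>l=Suc lp..lp1. \<bar>a1 l\<bar>) * eps powr (real lp + d)" by (simp add: sum_distrib_right)
      also have "\<dots> \<le> (\<Sum>l=0..lp1. \<bar>a1 l\<bar>) * eps powr (real lp + d)"
        by (rule mult_right_mono) (auto intro: sum_mono2)
      finally show ?thesis .
    qed
    have rem: "G1 * eps powr (real lp1 + d1) \<le> G1 * eps powr (real lp + d)"
      by (rule mult_left_mono, rule powr_mono') (use h E eps eps1 in auto)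
    have "f eps - (\<Sum>l=lm..lp. b l * eps ^ l) = (f eps - (\<Sum>l=lm1..lp1. a1 l * eps ^ l)) + (\<Sum>l=Suc lp..lp1. b l * eps ^ l)"
      using s1 s2 s3 by simp
    then have "\<bar>f eps - (\<Sum>l=lm..lp. b l * eps ^ l)\<bar> \<le> G1 * eps powr (real lp1 + d1) + (\<Sum>l=0..lp1. \<bar>a1 l\<bar>) * eps powr (real lp + d)"
      using B[OF eps] tail by linarith
    then show ?thesis using rem by (simp add: distrib_right)
  qed
  have Gp: "0 < G1 + (\<Sum>l=0..lp1. \<bar>a1 l\<bar>)" using Apos E by linarith
  show ?thesis unfolding expansion_with_bound_def b_def[symmetric]
    using main h E Gp by auto
qed

lemma sumexp:
  assumes J: "finite J" "J \<noteq> {}"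
    and ex: "\<forall>j\<in>J. expansion_with_bound eps0 (F j) lm lp (A j) d (G j) (E j)"
  shows "expansion_with_bound eps0 (\<lambda>eps. \<Sum>j\<in>J. F j eps) lm lp (\<lambda>l. \<Sum>j\<in>J. A j l) d
           (\<Sum>j\<in>J. G j) (Min (E ` J))"
proof -
  obtain j0 where j0: "j0 \<in> J" using J by auto
  have P: "lm \<le> lp" "0 < d" "d \<le> 1" using ex j0 unfolding expansion_with_bound_def by auto
  have Gp: "0 < (\<Sum>j\<in>J. G j)" using ex J by (intro sum_pos) (auto simp: expansion_with_bound_def)
  have Ep: "0 < Min (E ` J)" "Min (E ` J) \<le> eps0" using ex J j0
     apply (auto simp: expansion_with_bound_def)
    by (meson Min_le finite_imageI image_eqI order.trans)
  have main: "\<bar>(\<Sum>j\<in>J. F j eps) - (\<Sum>l=lm..lp. (\<Sum>j\<in>J. A j l) * eps ^ l)\<bar> \<le> (\<Sum>j\<in>J. G j) * eps powr (real lp + d)"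
    if eps: "0 < eps" "eps \<le> Min (E ` J)" for eps
  proof -
    have "(\<Sum>l=lm..lp. (\<Sum>j\<in>J. A j l) * eps ^ l) = (\<Sum>j\<in>J. \<Sum>l=lm..lp. A j l * eps ^ l)"
      by (simp add: sum_distrib_right sum.swap[of _ J])
    then have "(\<Sum>j\<in>J. F j eps) - (\<Sum>l=lm..lp. (\<Sum>j\<in>J. A j l) * eps ^ l)
       = (\<Sum>j\<in>J. F j eps - (\<Sum>l=lm..lp. A j l * eps ^ l))" by (simp add: sum_subtractf)
    then have "\<bar>(\<Sum>j\<in>J. F j eps) - (\<Sum>l=lm..lp. (\<Sum>j\<in>J. A j l) * eps ^ l)\<bar>
        \<le> (\<Sum>j\<in>J. \<bar>F j eps - (\<Sum>l=lm..lp. A j l * eps ^ l)\<bar>)" by (simp add: sum_abs)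
    also have "\<dots> \<le> (\<Sum>j\<in>J. G j * eps powr (real lp + d))"
    proof (rule sum_mono)
      fix j assume j: "j \<in> J"
      have "eps \<le> E j" using eps j J by (meson Min_le finite_imageI image_eqI order.trans)
      then show "\<bar>F j eps - (\<Sum>l=lm..lp. A j l * eps ^ l)\<bar> \<le> G j * eps powr (real lp + d)"
        using ex j eps unfolding expansion_with_bound_def by auto
    qed
    also have "\<dots> = (\<Sum>j\<in>J. G j) * eps powr (real lp + d)" by (simp add: sum_distrib_right)
    finally show ?thesis .
  qed
  show ?thesis unfolding expansion_with_bound_def using P Gp Ep main by auto
qed

lemma expcong:
  assumes "expansion_with_bound eps0 f lm lp a d G e"
    and "\<And>eps. 0 < eps \<Longrightarrow> eps \<le> eps0 \<Longrightarrow> f eps = g eps"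
  shows "expansion_with_bound eps0 g lm lp a d G e"
  using assms unfolding expansion_with_bound_def by force

theorem lemma5:
  fixes N :: nat and eps0 :: real and p :: "real \<Rightarrow> nat \<Rightarrow> nat \<Rightarrow> real"
    and Y :: "nat \<Rightarrow> nat set"
  assumes "N \<ge> 2"
    and "0 < eps0" and "eps0 \<le> 1"
    and "stochastic_family N eps0 p"
    and "condition_A N eps0 p Y"
    and "condition_D' N eps0 p Y"
    and "r \<in> {1..N}"
  shows "\<exists>lm lp a \<delta> G e.
           expansion_with_bound eps0 (\<lambda>eps. 1 - p eps r r) lm lp a \<delta> G e \<and> a lm \<noteq> 0"
proof -
  note A = assms(5)[unfolded condition_A_def]
  define J where "J = Y r - {r}"
  have YN: "Y r \<subseteq> {1..N}" using A assms(7) by auto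
  have finJ: "finite J" unfolding J_def using YN finite_subset by blast
  have JN: "J \<subseteq> {1..N}" using YN J_def by auto
  obtain j0 where j0: "j0 \<in> {1..N}" "j0 \<noteq> r"
  proof (cases "r = 1")
    case True then show ?thesis using that[of 2] assms(1) by auto
  next
    case False then show ?thesis using that[of 1] assms(1,7) by auto
  qed
  obtain n :: nat and l where path: "n \<ge> 1" "l 0 = r" "l n = j0" "\<forall>m\<in>{1..n}. l m \<in> Y (l (m - 1))"
  proof -
    have "\<exists>(n::nat) l. 1 \<le> n \<and> l 0 = r \<and> l n = j0 \<and> (\<forall>m\<in>{1..n}. l m \<in> Y (l (m - 1)))"
      by (rule bspec[OF bspec[OF conjunct2[OF conjunct2[OF conjunct2[OF A]]] assms(7)] j0(1)])
    then show ?thesis using that by blast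
  qed
  define m where "m = (LEAST m. l m \<noteq> r)"
  have lm: "l m \<noteq> r" unfolding m_def by (rule LeastI[of _ n]) (use path j0 in auto)
  have mn: "m \<le> n" unfolding m_def by (rule Least_le) (use path j0 in auto)
  have m1: "m \<ge> 1" using lm path by (cases m) auto
  have lm1: "l (m - 1) = r"
  proof (rule ccontr)
    assume "l (m - 1) \<noteq> r"
    then have "m \<le> m - 1" unfolding m_def by (rule Least_le)
    then show False using m1 by simp
  qed
  have "l m \<in> J" using path mn m1 lm lm1 unfolding J_def by force
  then have Jne: "J \<noteq> {}" by auto
  have "\<forall>j\<in>J. \<exists>lm lp a \<delta> G e. expansion_with_bound eps0 (\<lambda>eps. p eps r j) lm lp a \<delta> G e \<and> a lm > 0"
    using assms(6,7) unfolding condition_D'_def J_def by auto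
  then obtain LM LP AA D GG E where EX: "\<forall>j\<in>J. expansion_with_bound eps0 (\<lambda>eps. p eps r j) (LM j) (LP j) (AA j) (D j) (GG j) (E j) \<and> AA j (LM j) > 0"
    by metis
  define Lm where "Lm = Min (LM ` J)"
  define Lp where "Lp = Min (LP ` J)"
  define d where "d = Min (D ` J)"
  define B where "B = (\<lambda>j l. if LM j \<le> l \<and> l \<le> LP j then AA j l else 0)"
  define GG' where "GG' = (\<lambda>j. GG j + (\<Sum>l=0..LP j. \<bar>AA j l\<bar>))"
  have Lmle: "\<And>j. j \<in> J \<Longrightarrow> Lm \<le> LM j" unfolding Lm_def using finJ by auto
  have Lple: "\<And>j. j \<in> J \<Longrightarrow> Lp \<le> LP j" unfolding Lp_def using finJ by auto
  have dle: "\<And>j. j \<in> J \<Longrightarrow> d \<le> D j" unfolding d_def using finJ by auto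
  obtain jm where jm: "jm \<in> J" "LM jm = Lm" unfolding Lm_def using finJ Jne
    by (metis (mono_tags, lifting) Min_in empty_is_image finite_imageI imageE)
  obtain jp where jp: "jp \<in> J" "LP jp = Lp" unfolding Lp_def using finJ Jne
    by (metis (mono_tags, lifting) Min_in empty_is_image finite_imageI imageE)
  obtain jd where jd: "jd \<in> J" "D jd = d" unfolding d_def using finJ Jne
    by (metis (mono_tags, lifting) Min_in empty_is_image finite_imageI imageE)
  have LmLp: "Lm \<le> Lp" using EX jp Lmle[OF jp(1)] unfolding expansion_with_bound_def by auto
  have dpos: "0 < d" using EX jd unfolding expansion_with_bound_def by auto
  have T: "\<forall>j\<in>J. expansion_with_bound eps0 (\<lambda>eps. p eps r j) Lm Lp (B j) d (GG' j) (E j)"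
  proof
    fix j assume j: "j \<in> J"
    show "expansion_with_bound eps0 (\<lambda>eps. p eps r j) Lm Lp (B j) d (GG' j) (E j)"
      unfolding B_def GG'_def
      by (rule trunc) (use EX j assms(3) Lmle Lple dle LmLp dpos in auto)
  qed
  have S: "expansion_with_bound eps0 (\<lambda>eps. \<Sum>j\<in>J. p eps r j) Lm Lp (\<lambda>l. \<Sum>j\<in>J. B j l) d
           (\<Sum>j\<in>J. GG' j) (Min (E ` J))"
    by (rule sumexp[OF finJ Jne T])
  have eq: "(\<Sum>j\<in>J. p eps r j) = 1 - p eps r r" if eps: "0 < eps" "eps \<le> eps0" for eps
  proof -
    have st: "(\<Sum>j=1..N. p eps r j) = 1" using assms(4,7) eps unfolding stochastic_family_def by auto
    have z: "\<forall>j\<in>{1..N}. j \<notin> Y r \<longrightarrow> p eps r j = 0" using A assms(7) eps by auto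
    have "(\<Sum>j=1..N. p eps r j) = p eps r r + (\<Sum>j\<in>{1..N} - {r}. p eps r j)"
      using assms(7) by (simp add: sum.remove)
    also have "(\<Sum>j\<in>{1..N} - {r}. p eps r j) = (\<Sum>j\<in>J. p eps r j)"
      by (rule sum.mono_neutral_right) (use JN z in \<open>auto simp: J_def\<close>)
    finally show ?thesis using st by simp
  qed
  have pos: "0 < (\<Sum>j\<in>J. B j Lm)"
  proof -
    have nn: "\<forall>j\<in>J. 0 \<le> B j Lm"
    proof
      fix j assume j: "j \<in> J"
      show "0 \<le> B j Lm"
      proof (cases "LM j \<le> Lm \<and> Lm \<le> LP j")
        case True
        then have "LM j = Lm" using Lmle[OF j] by simp
        then show ?thesis using True EX j unfolding B_def by force
      next
        case False then show ?thesis unfolding B_def by (subst if_not_P[OF False]) simp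
      qed
    qed
    have "B jm Lm > 0" using jm EX Lple[OF jm(1)] LmLp unfolding B_def expansion_with_bound_def
      by auto
    moreover have "B jm Lm \<le> (\<Sum>j\<in>J. B j Lm)" using nn jm finJ by (intro member_le_sum) auto
    ultimately show ?thesis by linarith
  qed
  show ?thesis
  proof (intro exI conjI)
    show "expansion_with_bound eps0 (\<lambda>eps. 1 - p eps r r) Lm Lp (\<lambda>l. \<Sum>j\<in>J. B j l) d (\<Sum>j\<in>J. GG' j) (Min (E ` J))"
      by (rule expcong[OF S eq])
    show "(\<Sum>j\<in>J. B j Lm) \<noteq> 0" using pos by simp
  qed
qed

end
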